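(* Let $\mathcal{H}$ be a Hilbert space of finite dimension $d\ge 2$, let $\mathcal{F}(\mathcal{H})\subseteq\mathcal{D}(\mathcal{H})$ be a closed set of free states, and let $\rho\in\mathcal{D}(\mathcal{H})\setminus\mathcal{F}(\mathcal{H})$. For $s>0$ and $m=2,\dots,d$ let $W_m(\rho,s)$ be Hermitian operators on $\mathcal{H}^{\otimes m}$ satisfying $\operatorname{tr}[W_m(\rho,s)\eta^{\otimes m}]=S_m\!\left(\frac{1+s}{s}\eta-\frac1s\rho\right)$ for all $\eta\in\mathcal{D}(\mathcal{H})$. If $0<s'<s$, then \[\{\eta\in\mathcal{D}(\mathcal{H}):\operatorname{tr}[W_m(\rho,s')\eta^{\otimes m}]\ge0\ \forall m=2,\dots,d\}\subsetneq\{\eta\in\mathcal{D}(\mathcal{H}):\operatorname{tr}[W_m(\rho,s)\eta^{\otimes m}]\ge0\ \forall m=2,\dots,d\}.\]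
   Context: $\mathcal{D}(\mathcal{H})$ is the set of density operators on $\mathcal{H}$. For a Hermitian operator $X$ on $\mathcal{H}$, define recursively $S_0(X)=1$ and $S_m(X)=\frac1m\sum_{l=1}^m(-1)^{l-1}\operatorname{tr}[X^l]\,S_{m-l}(X)$ for $m\ge1$. *)

theory Defs
  imports "Jordan_Normal_Form.Matrix" "Jordan_Normal_Form.Conjugate"
begin

text \<open>Operators on the m-fold tensor power are d^m x d^m
matrices, with the tensor product given by the Kronecker product.\<close>

definition mtrace :: "complex mat \<Rightarrow> complex" where
  "mtrace A = (\<Sum>i<dim_row A. A $$ (i, i))"

definition adjoint :: "complex mat \<Rightarrow> complex mat" where
  "adjoint A = mat (dim_col A) (dim_row A) (\<lambda>(i, j). cnj (A $$ (j, i)))"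

definition hermitian :: "nat \<Rightarrow> complex mat \<Rightarrow> bool" where
  "hermitian n A \<longleftrightarrow> A \<in> carrier_mat n n \<and> adjoint A = A"

definition positive_semidef :: "nat \<Rightarrow> complex mat \<Rightarrow> bool" where
  "positive_semidef n A \<longleftrightarrow> hermitian n A \<and>
     (\<forall>v \<in> carrier_vec n. 0 \<le> conjugate v \<bullet> (A *\<^sub>v v))"

definition density :: "nat \<Rightarrow> complex mat set" where
  "density d = {\<rho>. positive_semidef d \<rho> \<and> mtrace \<rho> = 1}"

definition kron :: "complex mat \<Rightarrow> complex mat \<Rightarrow> complex mat" where
  "kron A B = mat (dim_row A * dim_row B) (dim_col A * dim_col B)
     (\<lambda>(i, j). A $$ (i div dim_row B, j div dim_col B) * B $$ (i mod dim_row B, j mod dim_col B))"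

fun tensor_pow :: "complex mat \<Rightarrow> nat \<Rightarrow> complex mat" where
  "tensor_pow A 0 = 1\<^sub>m 1"
| "tensor_pow A (Suc m) = kron A (tensor_pow A m)"

function S :: "complex mat \<Rightarrow> nat \<Rightarrow> complex" where
  "S X 0 = 1"
| "S X (Suc m) = (1 / of_nat (Suc m)) *
     (\<Sum>l\<in>{1..Suc m}. (-1) ^ (l - 1) * mtrace (X ^\<^sub>m l) * S X (Suc m - l))"
  by pat_completeness auto
termination
  by (relation "measure snd") auto

text \<open>Closed subsets of the d x d complex matrices (finite-dimensional, so the
topology is that of entrywise convergence).\<close>
definition closed_mat_set :: "nat \<Rightarrow> complex mat set \<Rightarrow> bool" where
  "closed_mat_set d F \<longleftrightarrow>
     (\<forall>f A. (\<forall>n. f n \<in> F) \<longrightarrow> A \<in> carrier_mat d d \<longrightarrow>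
        (\<forall>i<d. \<forall>j<d. (\<lambda>n. f n $$ (i, j)) \<longlonglongrightarrow> A $$ (i, j)) \<longrightarrow> A \<in> F)"

end

theory Submission
  imports Defs "Jordan_Normal_Form.Schur_Decomposition" "Jordan_Normal_Form.Spectral_Radius"
    "HOL-Computational_Algebra.Polynomial_FPS"
begin


definition epoly :: "(nat \<Rightarrow> real) \<Rightarrow> nat \<Rightarrow> real poly" where
  "epoly f n = (\<Prod>i<n. [:1, f i:])"

definition esym :: "(nat \<Rightarrow> real) \<Rightarrow> nat \<Rightarrow> nat \<Rightarrow> real" where
  "esym f n k = coeff (epoly f n) k"

definition psum :: "(nat \<Rightarrow> real) \<Rightarrow> nat \<Rightarrow> nat \<Rightarrow> real" where
  "psum f n l = (\<Sum>i<n. f i ^ l)"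

definition Gf :: "real \<Rightarrow> real fps" where
  "Gf c = Abs_fps (\<lambda>l. if l = 0 then 0 else - ((- c) ^ l))"

lemma Gf_eq: "(1 + fps_const c * fps_X) * Gf c = fps_const c * fps_X"
proof (rule fps_ext)
  fix l
  show "fps_nth ((1 + fps_const c * fps_X) * Gf c) l = fps_nth (fps_const c * fps_X) l"
  proof (cases l)
    case 0 then show ?thesis by (simp add: Gf_def algebra_simps)
  next
    case (Suc k)
    then show ?thesis
      by (cases k) (auto simp: Gf_def algebra_simps fps_X_mult_nth)
  qed
qed

lemma fps_lin: "fps_of_poly [:1, c::real:] = 1 + fps_const c * fps_X"
  by (rule fps_ext) (auto simp: coeff_pCons split: nat.split)

lemma fps_epoly: "fps_of_poly (epoly f n) = (\<Prod>i<n. 1 + fps_const (f i) * fps_X)"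
proof (induction n)
  case (Suc n)
  then show ?case
    by (simp only: epoly_def prod.lessThan_Suc fps_of_poly_mult fps_lin)
qed (simp add: epoly_def)

lemma newton_fps:
  "fps_X * fps_deriv (fps_of_poly (epoly f n)) = fps_of_poly (epoly f n) * (\<Sum>i<n. Gf (f i))"
proof (induction n)
  case 0 then show ?case by (simp add: fps_epoly)
next
  case (Suc n)
  define E where "E = fps_of_poly (epoly f n)"
  have E1: "fps_of_poly (epoly f (Suc n)) = E * (1 + fps_const (f n) * fps_X)"
    by (simp add: fps_epoly E_def)
  have IH: "fps_X * fps_deriv E = E * (\<Sum>i<n. Gf (f i))" using Suc E_def by simp
  have "fps_X * fps_deriv (fps_of_poly (epoly f (Suc n)))
      = (fps_X * fps_deriv E) * (1 + fps_const (f n) * fps_X) + E * (fps_const (f n) * fps_X)"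
    unfolding E1 by (simp add: fps_deriv_mult algebra_simps)
  also have "\<dots> = E * (1 + fps_const (f n) * fps_X) * (\<Sum>i<n. Gf (f i))
       + E * ((1 + fps_const (f n) * fps_X) * Gf (f n))"
    unfolding IH Gf_eq by (simp add: algebra_simps)
  also have "\<dots> = fps_of_poly (epoly f (Suc n)) * (\<Sum>i<Suc n. Gf (f i))"
    unfolding E1 by (simp add: algebra_simps)
  finally show ?case .
qed

lemma Gsum_nth: "fps_nth (\<Sum>i<n. Gf (f i)) l = (if l = 0 then 0 else (-1)^(l-1) * psum f n l)"
proof -
  have "fps_nth (\<Sum>i<n. Gf (f i)) l = (\<Sum>i<n. fps_nth (Gf (f i)) l)" by (simp add: fps_sum_nth)
  also have "\<dots> = (if l = 0 then 0 else (-1)^(l-1) * psum f n l)"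
  proof (cases l)
    case (Suc k)
    then show ?thesis
      by (simp add: Gf_def psum_def sum_distrib_left power_minus' mult_ac)
  qed (simp add: Gf_def)
  finally show ?thesis .
qed

lemma newton:
  "of_nat (Suc m) * esym f n (Suc m) =
     (\<Sum>l\<in>{1..Suc m}. (-1) ^ (l - 1) * psum f n l * esym f n (Suc m - l))"
proof -
  define E where "E = fps_of_poly (epoly f n)"
  define P where "P = (\<Sum>i<n. Gf (f i))"
  have "fps_nth (fps_X * fps_deriv E) (Suc m) = fps_nth (E * P) (Suc m)"
    using newton_fps[of f n] E_def P_def by simp
  moreover have "fps_nth (fps_X * fps_deriv E) (Suc m) = of_nat (Suc m) * esym f n (Suc m)"
    by (simp add: fps_X_mult_nth E_def esym_def)
  moreover have "fps_nth (E * P) (Suc m) = (\<Sum>i=0..Suc m. fps_nth E i * fps_nth P ((Suc m - i)))"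
    by (simp add: fps_mult_nth)
  moreover have "\<dots> = (\<Sum>i=0..Suc m. fps_nth E ((Suc m - i)) * fps_nth P i)"
    by (subst sum.atLeastAtMost_rev) simp
  moreover have "\<dots> = (\<Sum>i=1..Suc m. fps_nth E ((Suc m - i)) * fps_nth P i)"
    by (simp add: P_def Gsum_nth sum.atLeast_Suc_atMost)
  moreover have "\<dots> = (\<Sum>l\<in>{1..Suc m}. (-1) ^ (l - 1) * psum f n l * esym f n (Suc m - l))"
    by (rule sum.cong) (auto simp: P_def Gsum_nth E_def esym_def)
  ultimately show ?thesis by simp
qed



lemma dim_row_adjoint[simp]: "dim_row (adjoint A) = dim_col A"
  and dim_col_adjoint[simp]: "dim_col (adjoint A) = dim_row A"
  by (auto simp: adjoint_def)

lemma adjoint_carrier[simp]: "A \<in> carrier_mat n m \<Longrightarrow> adjoint A \<in> carrier_mat m n"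
  by (auto simp: adjoint_def)

lemma index_adjoint[simp]: "i < dim_col A \<Longrightarrow> j < dim_row A \<Longrightarrow> adjoint A $$ (i, j) = cnj (A $$ (j, i))"
  by (auto simp: adjoint_def)

lemma adjoint_adjoint[simp]: "adjoint (adjoint A) = A"
  by (rule eq_matI) auto

lemma adjoint_mult:
  assumes "A \<in> carrier_mat n k" "B \<in> carrier_mat k m"
  shows "adjoint (A * B) = adjoint B * adjoint A"
  using assms
  by (intro eq_matI) (auto simp: scalar_prod_def row_def col_def mult.commute)

lemma mult_sq[simp]: "A \<in> carrier_mat n n \<Longrightarrow> B \<in> carrier_mat n n \<Longrightarrow> A * B \<in> carrier_mat n n"
  by (rule mult_carrier_mat)

lemma adjoint_mult_sq: "A \<in> carrier_mat n n \<Longrightarrow> B \<in> carrier_mat n n \<Longrightarrow> adjoint (A * B) = adjoint B * adjoint A"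
  by (rule adjoint_mult)

lemma assoc_sq: "A \<in> carrier_mat n n \<Longrightarrow> B \<in> carrier_mat n n \<Longrightarrow> C \<in> carrier_mat n n \<Longrightarrow> A * B * C = A * (B * C)"
  by (rule assoc_mult_mat)

lemma assoc_vec_sq: "A \<in> carrier_mat n n \<Longrightarrow> B \<in> carrier_mat n n \<Longrightarrow> v \<in> carrier_vec n \<Longrightarrow> A * B *\<^sub>v v = A *\<^sub>v (B *\<^sub>v v)"
  by (rule assoc_mult_mat_vec)

lemma mult_vec_sq[simp]: "A \<in> carrier_mat n n \<Longrightarrow> v \<in> carrier_vec n \<Longrightarrow> A *\<^sub>v v \<in> carrier_vec n"
  by (rule mult_mat_vec_carrier)

lemma adjoint_one[simp]: "adjoint (1\<^sub>m n) = 1\<^sub>m n"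
  by (rule eq_matI) auto

lemma adjoint_smult_minus:
  assumes "A \<in> carrier_mat n n" "B \<in> carrier_mat n n"
  shows "adjoint (complex_of_real a \<cdot>\<^sub>m A - complex_of_real b \<cdot>\<^sub>m B)
     = complex_of_real a \<cdot>\<^sub>m adjoint A - complex_of_real b \<cdot>\<^sub>m adjoint B"
  using assms by (intro eq_matI) auto

lemma qf_adj:
  assumes U: "U \<in> carrier_mat n k" and v: "v \<in> carrier_vec n" and x: "x \<in> carrier_vec k"
  shows "conjugate v \<bullet> (U *\<^sub>v x) = conjugate (adjoint U *\<^sub>v v) \<bullet> x"
proof -
  have "conjugate v \<bullet> (U *\<^sub>v x) = (\<Sum>i<n. cnj (v $ i) * (\<Sum>j<k. U $$ (i, j) * x $ j))"
    using U v x by (simp add: scalar_prod_def row_def lessThan_atLeast0)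
  also have "\<dots> = (\<Sum>i<n. \<Sum>j<k. cnj (v $ i) * U $$ (i, j) * x $ j)"
    by (simp add: sum_distrib_left mult.assoc)
  also have "\<dots> = (\<Sum>j<k. \<Sum>i<n. cnj (v $ i) * U $$ (i, j) * x $ j)"
    by (rule sum.swap)
  also have "\<dots> = (\<Sum>j<k. cnj (\<Sum>i<n. cnj (U $$ (i, j)) * v $ i) * x $ j)"
    by (simp add: sum_distrib_left sum_distrib_right mult_ac)
  also have "\<dots> = conjugate (adjoint U *\<^sub>v v) \<bullet> x"
    using U v x by (simp add: scalar_prod_def row_def lessThan_atLeast0)
  finally show ?thesis .
qed

lemma mtrace_comm:
  assumes "A \<in> carrier_mat n m" "B \<in> carrier_mat m n"
  shows "mtrace (A * B) = mtrace (B * A)"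
proof -
  have "mtrace (A * B) = (\<Sum>i<n. \<Sum>j<m. A $$ (i, j) * B $$ (j, i))"
    using assms by (simp add: mtrace_def scalar_prod_def row_def col_def lessThan_atLeast0)
  also have "\<dots> = (\<Sum>j<m. \<Sum>i<n. B $$ (j, i) * A $$ (i, j))"
    by (subst sum.swap) (simp add: mult.commute)
  also have "\<dots> = mtrace (B * A)"
    using assms by (simp add: mtrace_def scalar_prod_def row_def col_def lessThan_atLeast0)
  finally show ?thesis .
qed

definition diagm :: "nat \<Rightarrow> (nat \<Rightarrow> real) \<Rightarrow> complex mat" where
  "diagm n \<mu> = mat n n (\<lambda>(i, j). if i = j then complex_of_real (\<mu> i) else 0)"

lemma diagm_carrier[simp]: "diagm n \<mu> \<in> carrier_mat n n"
  and dim_diagm[simp]: "dim_row (diagm n \<mu>) = n" "dim_col (diagm n \<mu>) = n"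
  by (auto simp: diagm_def)

lemma index_diagm[simp]: "i < n \<Longrightarrow> j < n \<Longrightarrow> diagm n \<mu> $$ (i, j) = (if i = j then complex_of_real (\<mu> i) else 0)"
  by (auto simp: diagm_def)

lemma adjoint_diagm[simp]: "adjoint (diagm n \<mu>) = diagm n \<mu>"
  by (rule eq_matI) auto

lemma diagm_mult: "diagm n \<mu> * diagm n \<nu> = diagm n (\<lambda>i. \<mu> i * \<nu> i)"
proof (rule eq_matI)
  fix i j assume ij: "i < dim_row (diagm n (\<lambda>i. \<mu> i * \<nu> i))" "j < dim_col (diagm n (\<lambda>i. \<mu> i * \<nu> i))"
  then have "(diagm n \<mu> * diagm n \<nu>) $$ (i, j) = (\<Sum>k\<in>{0..<n}. diagm n \<mu> $$ (i, k) * diagm n \<nu> $$ (k, j))"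
    by (simp add: scalar_prod_def row_def col_def)
  also have "\<dots> = (\<Sum>k\<in>{0..<n}. if k = i then diagm n \<mu> $$ (i, k) * diagm n \<nu> $$ (k, j) else 0)"
    using ij by (intro sum.cong) auto
  also have "\<dots> = diagm n (\<lambda>i. \<mu> i * \<nu> i) $$ (i, j)"
    using ij by simp
  finally show "(diagm n \<mu> * diagm n \<nu>) $$ (i, j) = diagm n (\<lambda>i. \<mu> i * \<nu> i) $$ (i, j)" .
qed auto

lemma diagm_pow: "diagm n \<mu> ^\<^sub>m l = diagm n (\<lambda>i. \<mu> i ^ l)"
proof (induction l)
  case 0 then show ?case by (intro eq_matI) auto
next
  case (Suc l) then show ?case by (simp add: diagm_mult mult.commute)
qed

lemma mtrace_diagm: "mtrace (diagm n \<mu>) = complex_of_real (\<Sum>i<n. \<mu> i)"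
  by (simp add: mtrace_def)

lemma diagm_lin: "complex_of_real a \<cdot>\<^sub>m diagm n \<mu> - complex_of_real b \<cdot>\<^sub>m diagm n \<nu> = diagm n (\<lambda>i. a * \<mu> i - b * \<nu> i)"
  by (intro eq_matI) auto


definition unitary :: "nat \<Rightarrow> complex mat \<Rightarrow> bool" where
  "unitary n U \<longleftrightarrow> U \<in> carrier_mat n n \<and> adjoint U * U = 1\<^sub>m n \<and> U * adjoint U = 1\<^sub>m n"

lemma diagm_mult_vec: "w \<in> carrier_vec n \<Longrightarrow> diagm n \<mu> *\<^sub>v w = vec n (\<lambda>i. complex_of_real (\<mu> i) * w $ i)"
proof (rule eq_vecI)
  fix i assume w: "w \<in> carrier_vec n" and i: "i < dim_vec (vec n (\<lambda>i. complex_of_real (\<mu> i) * w $ i))"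
  then have "(diagm n \<mu> *\<^sub>v w) $ i = (\<Sum>k\<in>{0..<n}. diagm n \<mu> $$ (i, k) * w $ k)"
    by (simp add: scalar_prod_def row_def)
  also have "\<dots> = (\<Sum>k\<in>{0..<n}. if k = i then diagm n \<mu> $$ (i, k) * w $ k else 0)"
    using i by (intro sum.cong) auto
  finally show "(diagm n \<mu> *\<^sub>v w) $ i = vec n (\<lambda>i. complex_of_real (\<mu> i) * w $ i) $ i"
    using i by simp
qed simp

lemma qf_diagm: "w \<in> carrier_vec n \<Longrightarrow>
   conjugate w \<bullet> (diagm n \<mu> *\<^sub>v w) = complex_of_real (\<Sum>i<n. \<mu> i * (cmod (w $ i))^2)"
proof -
  assume w: "w \<in> carrier_vec n"
  have "conjugate w \<bullet> (diagm n \<mu> *\<^sub>v w) = (\<Sum>i<n. cnj (w $ i) * (complex_of_real (\<mu> i) * w $ i))"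
    using w by (simp add: diagm_mult_vec scalar_prod_def lessThan_atLeast0)
  also have "\<dots> = (\<Sum>i<n. complex_of_real (\<mu> i * (cmod (w $ i))^2))"
  proof (rule sum.cong)
    fix i
    have "cnj (w $ i) * (complex_of_real (\<mu> i) * w $ i) = complex_of_real (\<mu> i) * (w $ i * cnj (w $ i))"
      by (simp add: mult_ac)
    also have "\<dots> = complex_of_real (\<mu> i) * complex_of_real ((cmod (w $ i))^2)"
      by (simp only: complex_norm_square)
    also have "\<dots> = complex_of_real (\<mu> i * (cmod (w $ i))^2)"
      by (simp only: of_real_mult)
    finally show "cnj (w $ i) * (complex_of_real (\<mu> i) * w $ i) = complex_of_real (\<mu> i * (cmod (w $ i))^2)" .
  qed simp
  also have "\<dots> = complex_of_real (\<Sum>i<n. \<mu> i * (cmod (w $ i))^2)" by simp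
  finally show ?thesis .
qed

context
  fixes n U
  assumes U: "unitary n U"
begin

lemma U_carrier: "U \<in> carrier_mat n n" and UhU: "adjoint U * U = 1\<^sub>m n" and UUh: "U * adjoint U = 1\<^sub>m n"
  using U by (auto simp: unitary_def)

lemma ud_carrier: "U * diagm n \<mu> * adjoint U \<in> carrier_mat n n"
  using U_carrier by auto

lemma ud_hermitian: "hermitian n (U * diagm n \<mu> * adjoint U)"
proof -
  have "adjoint (U * diagm n \<mu> * adjoint U) = adjoint (adjoint U) * adjoint (U * diagm n \<mu>)"
    using U_carrier by (intro adjoint_mult_sq[of _ n]) auto
  also have "\<dots> = U * (diagm n \<mu> * adjoint U)"
    using U_carrier by (simp add: adjoint_mult_sq[of _ n])
  also have "\<dots> = U * diagm n \<mu> * adjoint U"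
    using U_carrier by (simp add: assoc_sq[of _ n])
  finally show ?thesis using ud_carrier unfolding hermitian_def by simp
qed

lemma ud_pow: "(U * diagm n \<mu> * adjoint U) ^\<^sub>m l = U * diagm n (\<lambda>i. \<mu> i ^ l) * adjoint U"
proof (induction l)
  case 0
  have "diagm n (\<lambda>i. \<mu> i ^ 0) = 1\<^sub>m n" by (intro eq_matI) auto
  then show ?case using U_carrier UUh by simp
next
  case (Suc l)
  have C: "U \<in> carrier_mat n n" "adjoint U \<in> carrier_mat n n" using U_carrier by auto
  have "(U * diagm n \<mu> * adjoint U) ^\<^sub>m Suc l
     = (U * diagm n (\<lambda>i. \<mu> i ^ l) * adjoint U) * (U * diagm n \<mu> * adjoint U)"
    using Suc by simp
  also have "\<dots> = U * diagm n (\<lambda>i. \<mu> i ^ l) * (adjoint U * U) * diagm n \<mu> * adjoint U"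
    using C by (simp add: assoc_sq[of _ n])
  also have "\<dots> = U * (diagm n (\<lambda>i. \<mu> i ^ l) * diagm n \<mu>) * adjoint U"
    using C UhU by (simp add: assoc_sq[of _ n])
  also have "\<dots> = U * diagm n (\<lambda>i. \<mu> i ^ Suc l) * adjoint U"
    by (simp add: diagm_mult mult.commute)
  finally show ?case .
qed

lemma mtrace_conj: "M \<in> carrier_mat n n \<Longrightarrow> mtrace (U * M * adjoint U) = mtrace M"
proof -
  assume M: "M \<in> carrier_mat n n"
  have C: "U \<in> carrier_mat n n" "adjoint U \<in> carrier_mat n n" using U_carrier by auto
  have "mtrace (U * M * adjoint U) = mtrace (adjoint U * (U * M))"
    using C M by (intro mtrace_comm[of _ n n]) auto
  also have "\<dots> = mtrace ((adjoint U * U) * M)"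
    using C M by (simp add: assoc_sq[of _ n])
  finally show ?thesis using UhU M by simp
qed

lemma ud_trace_pow: "mtrace ((U * diagm n \<mu> * adjoint U) ^\<^sub>m l) = complex_of_real (\<Sum>i<n. \<mu> i ^ l)"
  by (simp add: ud_pow mtrace_conj mtrace_diagm)

lemma ud_qf: "v \<in> carrier_vec n \<Longrightarrow> conjugate v \<bullet> ((U * diagm n \<mu> * adjoint U) *\<^sub>v v)
   = complex_of_real (\<Sum>i<n. \<mu> i * (cmod ((adjoint U *\<^sub>v v) $ i))^2)"
proof -
  assume v: "v \<in> carrier_vec n"
  have C: "U \<in> carrier_mat n n" "adjoint U \<in> carrier_mat n n" using U_carrier by auto
  have "(U * diagm n \<mu> * adjoint U) *\<^sub>v v = U *\<^sub>v (diagm n \<mu> *\<^sub>v (adjoint U *\<^sub>v v))"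
    using C v by (simp add: assoc_vec_sq[of _ n])
  then have "conjugate v \<bullet> ((U * diagm n \<mu> * adjoint U) *\<^sub>v v)
      = conjugate (adjoint U *\<^sub>v v) \<bullet> (diagm n \<mu> *\<^sub>v (adjoint U *\<^sub>v v))"
    using C v by (simp add: qf_adj[of _ n n])
  also have "\<dots> = complex_of_real (\<Sum>i<n. \<mu> i * (cmod ((adjoint U *\<^sub>v v) $ i))^2)"
    using C v by (intro qf_diagm) auto
  finally show ?thesis .
qed

lemma ud_psd: "positive_semidef n (U * diagm n \<mu> * adjoint U) \<longleftrightarrow> (\<forall>i<n. \<mu> i \<ge> 0)"
proof
  assume psd: "positive_semidef n (U * diagm n \<mu> * adjoint U)"
  show "\<forall>i<n. \<mu> i \<ge> 0"
  proof (intro allI impI)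
    fix i assume i: "i < n"
    have C: "U \<in> carrier_mat n n" "adjoint U \<in> carrier_mat n n" using U_carrier by auto
    define v where "v = U *\<^sub>v unit_vec n i"
    have v: "v \<in> carrier_vec n" using C by (simp add: v_def)
    have w: "adjoint U *\<^sub>v v = unit_vec n i"
      using C UhU by (simp add: v_def assoc_vec_sq[symmetric, of _ n])
    have "(\<Sum>k<n. \<mu> k * (cmod (unit_vec n i $ k))^2) = (\<Sum>k<n. if k = i then \<mu> k else 0)"
      by (intro sum.cong) (auto simp: unit_vec_def)
    also have "\<dots> = \<mu> i" using i by simp
    finally have eq: "(\<Sum>k<n. \<mu> k * (cmod (unit_vec n i $ k))^2) = \<mu> i" .
    have "conjugate v \<bullet> ((U * diagm n \<mu> * adjoint U) *\<^sub>v v) = complex_of_real (\<Sum>k<n. \<mu> k * (cmod (unit_vec n i $ k))^2)"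
      using ud_qf[OF v] w by (simp only:)
    then have "conjugate v \<bullet> ((U * diagm n \<mu> * adjoint U) *\<^sub>v v) = complex_of_real (\<mu> i)"
      by (simp only: eq)
    moreover have "0 \<le> conjugate v \<bullet> ((U * diagm n \<mu> * adjoint U) *\<^sub>v v)"
      using psd v unfolding positive_semidef_def by blast
    ultimately show "\<mu> i \<ge> 0" by (simp add: less_eq_complex_def)
  qed
next
  assume nn: "\<forall>i<n. \<mu> i \<ge> 0"
  show "positive_semidef n (U * diagm n \<mu> * adjoint U)"
    unfolding positive_semidef_def
  proof (intro conjI ballI ud_hermitian)
    fix v :: "complex vec" assume v: "v \<in> carrier_vec n"
    have "0 \<le> (\<Sum>i<n. \<mu> i * (cmod ((adjoint U *\<^sub>v v) $ i))^2)"
      using nn by (intro sum_nonneg) auto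
    then show "0 \<le> conjugate v \<bullet> ((U * diagm n \<mu> * adjoint U) *\<^sub>v v)"
      unfolding ud_qf[OF v] by (simp only: less_eq_complex_def Re_complex_of_real Im_complex_of_real) simp
  qed
qed

end



definition nv :: "complex vec \<Rightarrow> complex vec" where
  "nv w = complex_of_real (1 / sqrt (Re (w \<bullet>c w))) \<cdot>\<^sub>v w"

lemma nv_carrier[simp]: "w \<in> carrier_vec n \<Longrightarrow> nv w \<in> carrier_vec n"
  by (simp add: nv_def)

lemma dim_nv[simp]: "dim_vec (nv w) = dim_vec w"
  by (simp add: nv_def)

lemma cprod_smult: "w1 \<in> carrier_vec n \<Longrightarrow> w2 \<in> carrier_vec n \<Longrightarrow>
  (complex_of_real a \<cdot>\<^sub>v w1) \<bullet>c (complex_of_real b \<cdot>\<^sub>v w2) = complex_of_real (a * b) * (w1 \<bullet>c w2)"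
  by (simp add: scalar_prod_def sum_distrib_left mult_ac)

lemma nv_orth: "w1 \<in> carrier_vec n \<Longrightarrow> w2 \<in> carrier_vec n \<Longrightarrow> w1 \<bullet>c w2 = 0 \<Longrightarrow> nv w1 \<bullet>c nv w2 = 0"
  unfolding nv_def by (subst cprod_smult[of _ n]) simp_all

lemma nv_norm: assumes w: "w \<in> carrier_vec n" "w \<noteq> 0\<^sub>v n" shows "nv w \<bullet>c nv w = 1"
proof -
  have pos: "w \<bullet>c w > 0" using w conjugate_square_greater_0_vec by blast
  then have r: "Re (w \<bullet>c w) > 0" "Im (w \<bullet>c w) = 0" by (auto simp: less_complex_def)
  then have ww: "w \<bullet>c w = complex_of_real (Re (w \<bullet>c w))" by (simp add: complex_eq_iff)
  have "nv w \<bullet>c nv w = complex_of_real (1 / sqrt (Re (w \<bullet>c w)) * (1 / sqrt (Re (w \<bullet>c w)))) * (w \<bullet>c w)"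
    unfolding nv_def using w by (subst cprod_smult[of _ n]) simp_all
  also have "\<dots> = complex_of_real (1 / sqrt (Re (w \<bullet>c w)) * (1 / sqrt (Re (w \<bullet>c w))) * Re (w \<bullet>c w))"
    by (subst ww) simp
  also have "\<dots> = 1" using r by (simp add: real_sqrt_mult[symmetric])
  finally show ?thesis .
qed

lemma nv_id: "w \<bullet>c w = 1 \<Longrightarrow> nv w = w"
  by (simp add: nv_def)


lemma unitary_from_left: "W \<in> carrier_mat n n \<Longrightarrow> adjoint W * W = 1\<^sub>m n \<Longrightarrow> unitary n W"
  unfolding unitary_def using mat_mult_left_right_inverse[of "adjoint W" n W] by auto

lemma unitary_completion:
  assumes u: "u \<in> carrier_vec n" and un: "u \<bullet>c u = 1"
  shows "\<exists>W. unitary n W \<and> col W 0 = u"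
proof -
  have n0: "u \<noteq> 0\<^sub>v n" using un u by auto
  have npos: "n > 0"
  proof (rule ccontr)
    assume "\<not> n > 0"
    then have "u \<bullet>c u = 0" using u by (simp add: scalar_prod_def)
    then show False using un by simp
  qed
  interpret cof_vec_space n "TYPE(complex)" .
  define b where "b = basis_completion u"
  have b: "set b \<subseteq> carrier_vec n" "distinct b" "\<not> lin_dep (set b)" "length b = n" "hd b = u"
    using basis_completion[OF u n0] unfolding b_def by auto
  obtain vs where bv: "b = u # vs" using b(4,5) npos by (cases b) auto
  define ws where "ws = gram_schmidt n b"
  have ws: "corthogonal ws" "set ws \<subseteq> carrier_vec n" "length ws = n"
    using gram_schmidt_result[OF b(1) b(2) b(3) ws_def] b(4) by auto
  have hdws: "hd ws = u" using gram_schmidt_hd[OF u, of vs] bv ws_def by simp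
  have ws0: "ws ! 0 = u" using hdws ws(3) npos by (cases ws) auto
  define ws' where "ws' = map nv ws"
  define W where "W = mat_of_cols n ws'"
  have Wc: "W \<in> carrier_mat n n" unfolding W_def ws'_def using ws(3) mat_of_cols_carrier(1)[of n "map nv ws"] by simp
  have Wij: "W $$ (k, j) = nv (ws ! j) $ k" if "k < n" "j < n" for k j
    unfolding W_def ws'_def using that ws(3) by (simp add: mat_of_cols_index)
  have wsc: "ws ! j \<in> carrier_vec n" if "j < n" for j using ws that by auto
  have col0: "col W 0 = u"
  proof (rule eq_vecI)
    show "dim_vec (col W 0) = dim_vec u" using Wc u by simp
    fix k assume "k < dim_vec u"
    then have k: "k < n" using u by simp
    then show "col W 0 $ k = u $ k"
      using Wc Wij[OF k npos] ws0 nv_id[OF un] by simp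
  qed
  have "adjoint W * W = 1\<^sub>m n"
  proof (rule eq_matI)
    fix i j assume "i < dim_row (1\<^sub>m n)" "j < dim_col (1\<^sub>m n)"
    then have i: "i < n" and j: "j < n" by auto
    have "(adjoint W * W) $$ (i, j) = (\<Sum>k\<in>{0..<n}. cnj (W $$ (k, i)) * W $$ (k, j))"
      using Wc i j by (simp add: scalar_prod_def row_def col_def)
    also have "\<dots> = (\<Sum>k\<in>{0..<n}. nv (ws ! j) $ k * cnj (nv (ws ! i) $ k))"
      using i j by (intro sum.cong) (auto simp: Wij mult.commute)
    also have "\<dots> = nv (ws ! j) \<bullet>c nv (ws ! i)"
      using wsc[OF i] wsc[OF j] by (simp add: scalar_prod_def)
    also have "\<dots> = 1\<^sub>m n $$ (i, j)"
    proof (cases "i = j")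
      case True
      have "ws ! i \<bullet>c ws ! i \<noteq> 0" using ws(1) ws(3) i by (auto simp: corthogonal_def)
      then have "ws ! i \<noteq> 0\<^sub>v n" by auto
      then show ?thesis using True nv_norm[OF wsc[OF i]] i by simp
    next
      case False
      have "ws ! j \<bullet>c ws ! i = 0" using ws(1) ws(3) i j False by (auto simp: corthogonal_def)
      then show ?thesis using False nv_orth[OF wsc[OF j] wsc[OF i]] i j by simp
    qed
    finally show "(adjoint W * W) $$ (i, j) = 1\<^sub>m n $$ (i, j)" .
  qed (use Wc in auto)
  then show ?thesis using unitary_from_left[OF Wc] col0 by blast
qed



lemma ud_entry:
  assumes U: "U \<in> carrier_mat n n" and i: "i < n" and j: "j < n"
  shows "(U * diagm n \<mu> * adjoint U) $$ (i, j) = (\<Sum>k<n. U $$ (i, k) * complex_of_real (\<mu> k) * cnj (U $$ (j, k)))"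
proof -
  have UD: "(U * diagm n \<mu>) $$ (i, k) = U $$ (i, k) * complex_of_real (\<mu> k)" if k: "k < n" for k
  proof -
    have "(U * diagm n \<mu>) $$ (i, k) = (\<Sum>l\<in>{0..<n}. U $$ (i, l) * diagm n \<mu> $$ (l, k))"
      using U i k by (simp add: scalar_prod_def row_def col_def)
    also have "\<dots> = (\<Sum>l\<in>{0..<n}. if l = k then U $$ (i, l) * diagm n \<mu> $$ (l, k) else 0)"
      using k by (intro sum.cong) auto
    finally show ?thesis using k by simp
  qed
  have "(U * diagm n \<mu> * adjoint U) $$ (i, j) = (\<Sum>k\<in>{0..<n}. (U * diagm n \<mu>) $$ (i, k) * adjoint U $$ (k, j))"
    using U i j by (simp add: scalar_prod_def row_def col_def)
  also have "\<dots> = (\<Sum>k<n. U $$ (i, k) * complex_of_real (\<mu> k) * cnj (U $$ (j, k)))"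
    using U j by (auto simp: UD lessThan_atLeast0 intro!: sum.cong)
  finally show ?thesis .
qed

lemma spectral:
  assumes "A \<in> carrier_mat n n" and "adjoint A = A"
  shows "\<exists>U \<mu>. unitary n U \<and> A = U * diagm n \<mu> * adjoint U"
  using assms
proof (induction n arbitrary: A)
  case 0
  have "unitary 0 (1\<^sub>m 0)" by (simp add: unitary_def)
  moreover have "A = 1\<^sub>m 0 * diagm 0 (\<lambda>_. 0) * adjoint (1\<^sub>m 0)"
    using 0 by (intro eq_matI) auto
  ultimately show ?case by blast
next
  case (Suc m A)
  define n where "n = Suc m"
  have A: "A \<in> carrier_mat n n" and Ah: "adjoint A = A" using Suc n_def by auto
  obtain e where "e \<in> spectrum A" using spectrum_non_empty[OF A] n_def by auto
  then obtain v where v: "v \<in> carrier_vec n" "v \<noteq> 0\<^sub>v n" and Av: "A *\<^sub>v v = e \<cdot>\<^sub>v v"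
    using A unfolding spectrum_def eigenvalue_def eigenvector_def by auto
  define u where "u = nv v"
  have u: "u \<in> carrier_vec n" "u \<bullet>c u = 1" using nv_norm[OF v] v by (auto simp: u_def)
  have Au: "A *\<^sub>v u = e \<cdot>\<^sub>v u"
    using A v Av unfolding u_def nv_def by (simp add: mult_mat_vec smult_smult_assoc mult.commute)
  obtain W where W: "unitary n W" and Wu: "col W 0 = u" using unitary_completion[OF u] by blast
  have Wc: "W \<in> carrier_mat n n" and WhW: "adjoint W * W = 1\<^sub>m n" and WWh: "W * adjoint W = 1\<^sub>m n"
    using W by (auto simp: unitary_def)
  have Whc: "adjoint W \<in> carrier_mat n n" using Wc by simp
  define A' where "A' = adjoint W * A * W"
  have A'c: "A' \<in> carrier_mat n n" using Wc A by (simp add: A'_def)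
  have A'h: "adjoint A' = A'"
  proof -
    have "adjoint A' = adjoint W * adjoint (adjoint W * A)"
      unfolding A'_def using Wc A by (simp add: adjoint_mult_sq[of _ n])
    also have "\<dots> = adjoint W * (A * W)"
      using Wc A Ah by (simp add: adjoint_mult_sq[of _ n])
    finally show ?thesis unfolding A'_def using Wc A by (simp add: assoc_sq[of _ n])
  qed
  have e0: "unit_vec n 0 \<in> carrier_vec n" by simp
  have Wun: "W *\<^sub>v unit_vec n 0 = u"
  proof (rule eq_vecI)
    fix k assume "k < dim_vec u"
    then have k: "k < n" using u by simp
    have "(W *\<^sub>v unit_vec n 0) $ k = row W k \<bullet> unit_vec n 0" using Wc k by simp
    also have "\<dots> = W $$ (k, 0)" using Wc k n_def by simp
    also have "\<dots> = u $ k" using Wu[symmetric] Wc k n_def by simp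
    finally show "(W *\<^sub>v unit_vec n 0) $ k = u $ k" .
  qed (use Wc u in auto)
  have A'e: "A' *\<^sub>v unit_vec n 0 = e \<cdot>\<^sub>v unit_vec n 0"
  proof -
    have "A' *\<^sub>v unit_vec n 0 = adjoint W *\<^sub>v (A *\<^sub>v (W *\<^sub>v unit_vec n 0))"
      unfolding A'_def using Wc A by (simp add: assoc_vec_sq[of _ n])
    also have "\<dots> = e \<cdot>\<^sub>v (adjoint W *\<^sub>v (W *\<^sub>v unit_vec n 0))"
      unfolding Wun Au using Whc u by (simp add: mult_mat_vec)
    also have "\<dots> = e \<cdot>\<^sub>v unit_vec n 0"
      using Wc WhW by (simp add: assoc_vec_sq[symmetric, of _ n])
    finally show ?thesis .
  qed
  have A'col: "A' $$ (i, 0) = (if i = 0 then e else 0)" if i: "i < n" for i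
  proof -
    have "A' $$ (i, 0) = row A' i \<bullet> unit_vec n 0" using A'c i n_def by simp
    also have "\<dots> = (A' *\<^sub>v unit_vec n 0) $ i" using A'c i by simp
    finally show ?thesis using A'e i n_def by simp
  qed
  have A'row: "A' $$ (0, j) = (if j = 0 then e else 0)" if j: "j < n" for j
  proof -
    have "A' $$ (0, j) = adjoint A' $$ (0, j)" using A'h by simp
    also have "\<dots> = cnj (A' $$ (j, 0))" using A'c j n_def by simp
    finally show ?thesis using A'col[OF j] A'col[of 0] n_def by (auto simp: A'h)
  qed
  have e_real: "e = complex_of_real (Re e)"
  proof -
    have "A' $$ (0, 0) = adjoint A' $$ (0, 0)" using A'h by simp
    also have "\<dots> = cnj (A' $$ (0, 0))" using A'c n_def by simp
    finally have "e = cnj e" using A'col[of 0] n_def by simp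
    then show ?thesis by (metis Reals_cnj_iff complex_is_Real_iff of_real_Re)
  qed
  define A3 where "A3 = mat m m (\<lambda>(i, j). A' $$ (Suc i, Suc j))"
  have A3c: "A3 \<in> carrier_mat m m" by (simp add: A3_def)
  have A3h: "adjoint A3 = A3"
  proof (rule eq_matI)
    fix i j assume "i < dim_row A3" "j < dim_col A3"
    then have i: "i < m" and j: "j < m" by (auto simp: A3_def)
    have "A' $$ (Suc i, Suc j) = adjoint A' $$ (Suc i, Suc j)" using A'h by simp
    then show "adjoint A3 $$ (i, j) = A3 $$ (i, j)"
      using i j A'c n_def by (simp add: A3_def)
  qed (auto simp: A3_def)
  obtain U3 \<mu>3 where U3: "unitary m U3" and A3eq: "A3 = U3 * diagm m \<mu>3 * adjoint U3"
    using Suc.IH[OF A3c A3h] by blast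
  have U3c: "U3 \<in> carrier_mat m m" and U3hU3: "adjoint U3 * U3 = 1\<^sub>m m"
    using U3 by (auto simp: unitary_def)
  define V where "V = mat n n (\<lambda>(i, j). if i = 0 \<and> j = 0 then 1 else if i = 0 \<or> j = 0 then 0 else U3 $$ (i - 1, j - 1))"
  define \<mu> where "\<mu> = (\<lambda>i. if i = 0 then Re e else \<mu>3 (i - 1))"
  have Vc: "V \<in> carrier_mat n n" by (simp add: V_def)
  have VhV: "adjoint V * V = 1\<^sub>m n"
  proof (rule eq_matI)
    fix i j assume "i < dim_row (1\<^sub>m n)" "j < dim_col (1\<^sub>m n)"
    then have i: "i < n" and j: "j < n" by auto
    have "(adjoint V * V) $$ (i, j) = (\<Sum>k\<in>{0..<Suc m}. cnj (V $$ (k, i)) * V $$ (k, j))"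
      using Vc i j n_def by (simp add: scalar_prod_def row_def col_def)
    also have "\<dots> = cnj (V $$ (0, i)) * V $$ (0, j) + (\<Sum>k\<in>{0..<m}. cnj (V $$ (Suc k, i)) * V $$ (Suc k, j))"
      by (simp add: sum.atLeast0_lessThan_Suc_shift del: sum.op_ivl_Suc)
    also have "\<dots> = 1\<^sub>m n $$ (i, j)"
    proof (cases i)
      case 0
      then show ?thesis using i j n_def by (simp add: V_def)
    next
      case (Suc i')
      note i' = this
      show ?thesis
      proof (cases j)
        case 0
        then show ?thesis using i j i' n_def by (simp add: V_def)
      next
        case (Suc j')
        have "(\<Sum>k\<in>{0..<m}. cnj (V $$ (Suc k, i)) * V $$ (Suc k, j)) = (\<Sum>k\<in>{0..<m}. cnj (U3 $$ (k, i')) * U3 $$ (k, j'))"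
          using i j i' Suc n_def by (intro sum.cong) (auto simp: V_def)
        also have "\<dots> = (adjoint U3 * U3) $$ (i', j')"
          using U3c i j i' Suc n_def by (simp add: scalar_prod_def row_def col_def)
        also have "\<dots> = 1\<^sub>m n $$ (i, j)"
          using U3hU3 i j i' Suc n_def by simp
        finally show ?thesis using i j i' Suc n_def by (simp add: V_def)
      qed
    qed
    finally show "(adjoint V * V) $$ (i, j) = 1\<^sub>m n $$ (i, j)" .
  qed (use Vc in auto)
  have A'eq: "A' = V * diagm n \<mu> * adjoint V"
  proof (rule eq_matI)
    fix i j assume "i < dim_row (V * diagm n \<mu> * adjoint V)" "j < dim_col (V * diagm n \<mu> * adjoint V)"
    then have i: "i < n" and j: "j < n" using Vc by auto
    have "(V * diagm n \<mu> * adjoint V) $$ (i, j) = (\<Sum>k\<in>{0..<Suc m}. V $$ (i, k) * complex_of_real (\<mu> k) * cnj (V $$ (j, k)))"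
      using ud_entry[OF Vc i j] n_def by (simp add: lessThan_atLeast0)
    also have "\<dots> = V $$ (i, 0) * complex_of_real (\<mu> 0) * cnj (V $$ (j, 0)) +
        (\<Sum>k\<in>{0..<m}. V $$ (i, Suc k) * complex_of_real (\<mu> (Suc k)) * cnj (V $$ (j, Suc k)))"
      by (simp add: sum.atLeast0_lessThan_Suc_shift del: sum.op_ivl_Suc)
    also have "\<dots> = A' $$ (i, j)"
    proof (cases i)
      case 0
      then show ?thesis using i j n_def A'row[OF j] e_real by (simp add: V_def \<mu>_def)
    next
      case (Suc i')
      note i' = this
      show ?thesis
      proof (cases j)
        case 0
        then show ?thesis using i j i' n_def A'col[OF i] by (simp add: V_def)
      next
        case (Suc j')
        have "(\<Sum>k\<in>{0..<m}. V $$ (i, Suc k) * complex_of_real (\<mu> (Suc k)) * cnj (V $$ (j, Suc k)))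
            = (\<Sum>k<m. U3 $$ (i', k) * complex_of_real (\<mu>3 k) * cnj (U3 $$ (j', k)))"
          using i j i' Suc n_def by (auto simp: V_def \<mu>_def lessThan_atLeast0 intro!: sum.cong)
        also have "\<dots> = A3 $$ (i', j')"
          using ud_entry[OF U3c, of i' j' \<mu>3] A3eq i j i' Suc n_def by simp
        also have "\<dots> = A' $$ (i, j)"
          using i j i' Suc n_def by (simp add: A3_def)
        finally show ?thesis using i j i' Suc n_def by (simp add: V_def)
      qed
    qed
    finally show "A' $$ (i, j) = (V * diagm n \<mu> * adjoint V) $$ (i, j)" by simp
  qed (use Vc A'c in auto)
  define U where "U = W * V"
  have Uc: "U \<in> carrier_mat n n" using Wc Vc by (simp add: U_def)
  have Uh': "adjoint (W * V) = adjoint V * adjoint W" using Wc Vc by (simp add: adjoint_mult_sq[of _ n])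
  have "adjoint U * U = (adjoint V * adjoint W) * (W * V)" by (simp only: U_def Uh')
  also have "\<dots> = adjoint V * (adjoint W * W) * V"
    using Wc Vc by (simp add: assoc_sq[of _ n])
  finally have UhU: "adjoint U * U = 1\<^sub>m n" using WhW VhV Vc by simp
  have "A = (W * adjoint W) * A * (W * adjoint W)" using WWh A by simp
  also have "\<dots> = W * A' * adjoint W"
    unfolding A'_def using Wc A by (simp add: assoc_sq[of _ n])
  also have "\<dots> = W * (V * diagm n \<mu> * adjoint V) * adjoint W" unfolding A'eq ..
  also have "\<dots> = (W * V) * diagm n \<mu> * (adjoint V * adjoint W)"
    using Wc Vc by (simp add: assoc_sq[of _ n])
  also have "\<dots> = U * diagm n \<mu> * adjoint U" by (simp only: U_def Uh')
  finally have "A = U * diagm (Suc m) \<mu> * adjoint U" unfolding n_def .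
  moreover have "unitary (Suc m) U" using unitary_from_left[OF Uc UhU] n_def by simp
  ultimately show ?case by blast
qed



lemma poly_epoly: "poly (epoly f n) t = (\<Prod>i<n. 1 + f i * t)"
  by (simp add: epoly_def poly_prod mult.commute)

lemma esym_0[simp]: "esym f n 0 = 1"
proof -
  have "esym f n 0 = poly (epoly f n) 0" by (simp add: esym_def poly_0_coeff_0)
  then show ?thesis by (simp add: poly_epoly)
qed

lemma degree_epoly: "degree (epoly f n) \<le> n"
proof -
  have "degree (epoly f n) \<le> (\<Sum>i<n. degree [:1, f i:])"
    unfolding epoly_def using degree_prod_sum_le[of "{..<n}" "\<lambda>i. [:1, f i:]"] by (simp add: o_def)
  also have "\<dots> \<le> (\<Sum>i<n. 1)" by (intro sum_mono) simp
  finally show ?thesis by simp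
qed

lemma esym_big: "k > n \<Longrightarrow> esym f n k = 0"
  unfolding esym_def using degree_epoly[of f n] by (intro coeff_eq_0) simp

lemma esym_nonneg: "(\<forall>i<n. f i \<ge> 0) \<Longrightarrow> esym f n k \<ge> 0"
proof (induction n arbitrary: k)
  case 0 then show ?case by (cases k) (auto simp: esym_def epoly_def)
next
  case (Suc n)
  have e: "epoly f (Suc n) = epoly f n * [:1, f n:]" by (simp add: epoly_def)
  have "coeff (epoly f n * [:1, f n:]) k = (\<Sum>i\<le>k. coeff (epoly f n) i * coeff [:1, f n:] (k - i))"
    by (rule coeff_mult)
  also have "\<dots> \<ge> 0"
  proof (intro sum_nonneg mult_nonneg_nonneg)
    fix i show "coeff (epoly f n) i \<ge> 0" using Suc by (simp add: esym_def)
    show "coeff [:1, f n:] (k - i) \<ge> 0" using Suc.prems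
      by (cases "k - i") (auto simp: coeff_pCons split: nat.split)
  qed
  finally show ?case by (simp add: esym_def e)
qed

lemma esym_nonneg_imp:
  assumes nn: "\<forall>k\<le>n. esym f n k \<ge> 0"
  shows "\<forall>i<n. f i \<ge> 0"
proof (rule ccontr)
  assume "\<not> (\<forall>i<n. f i \<ge> 0)"
  then obtain j where j: "j < n" "f j < 0" by force
  define t where "t = - 1 / f j"
  have t: "t > 0" using j by (simp add: t_def)
  have "poly (epoly f n) t = 0"
    unfolding poly_epoly using j by (intro prod_zero) (auto simp: t_def intro!: bexI[of _ j])
  moreover have "poly (epoly f n) t = (\<Sum>i\<le>degree (epoly f n). coeff (epoly f n) i * t ^ i)"
    by (simp add: poly_altdef)
  moreover have "(\<Sum>i\<le>degree (epoly f n). coeff (epoly f n) i * t ^ i) \<ge> coeff (epoly f n) 0 * t ^ 0"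
  proof (rule member_le_sum)
    fix i assume "i \<in> {..degree (epoly f n)} - {0}"
    then have "i \<le> n" using degree_epoly[of f n] by auto
    then show "coeff (epoly f n) i * t ^ i \<ge> 0" using nn t by (simp add: esym_def)
  qed auto
  ultimately show False using esym_0[of f n] by (simp add: esym_def)
qed

lemma S_eq:
  assumes tr: "\<And>l. l \<ge> 1 \<Longrightarrow> mtrace (X ^\<^sub>m l) = complex_of_real (psum f n l)"
  shows "S X m = complex_of_real (esym f n m)"
proof (induction m rule: less_induct)
  case (less m)
  show ?case
  proof (cases m)
    case 0 then show ?thesis by simp
  next
    case (Suc k)
    have "S X (Suc k) = (1 / of_nat (Suc k)) *
       (\<Sum>l\<in>{1..Suc k}. (-1) ^ (l - 1) * mtrace (X ^\<^sub>m l) * S X (Suc k - l))" by simp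
    also have "\<dots> = (1 / of_nat (Suc k)) *
       (\<Sum>l\<in>{1..Suc k}. complex_of_real ((-1) ^ (l - 1) * psum f n l * esym f n (Suc k - l)))"
      using less Suc tr by (intro arg_cong[where f = "\<lambda>x. _ * x"] sum.cong) auto
    also have "\<dots> = complex_of_real ((1 / of_nat (Suc k)) * (of_nat (Suc k) * esym f n (Suc k)))"
      unfolding newton by simp
    also have "\<dots> = complex_of_real (esym f n (Suc k))"
      by (simp del: of_nat_Suc)
    finally show ?thesis using Suc by simp
  qed
qed

lemma herm_S_psd:
  assumes X: "hermitian d X" and tr1: "mtrace X = 1"
  shows "(\<forall>m\<in>{2..d}. 0 \<le> S X m) \<longleftrightarrow> positive_semidef d X"
proof -
  have Xc: "X \<in> carrier_mat d d" and Xh: "adjoint X = X" using X by (auto simp: hermitian_def)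
  obtain U \<mu> where U: "unitary d U" and Xeq: "X = U * diagm d \<mu> * adjoint U"
    using spectral[OF Xc Xh] by blast
  have tr: "mtrace (X ^\<^sub>m l) = complex_of_real (psum \<mu> d l)" for l
    unfolding Xeq psum_def by (rule ud_trace_pow[OF U])
  have Se: "S X m = complex_of_real (esym \<mu> d m)" for m
    by (rule S_eq) (use tr in auto)
  have "S X 1 = mtrace X" using Xc by simp
  then have e1: "esym \<mu> d 1 = 1" using Se[of 1] tr1 by simp
  have "(\<forall>m\<in>{2..d}. 0 \<le> S X m) \<longleftrightarrow> (\<forall>k\<le>d. esym \<mu> d k \<ge> 0)"
  proof
    assume h: "\<forall>m\<in>{2..d}. 0 \<le> S X m"
    show "\<forall>k\<le>d. esym \<mu> d k \<ge> 0"
    proof (intro allI impI)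
      fix k assume k: "k \<le> d"
      show "esym \<mu> d k \<ge> 0"
      proof (cases "k \<le> 1")
        case True then show ?thesis using e1 by (cases k) auto
      next
        case False
        then have "0 \<le> S X k" using h k by auto
        then show ?thesis using Se[of k] by (simp add: less_eq_complex_def)
      qed
    qed
  next
    assume h: "\<forall>k\<le>d. esym \<mu> d k \<ge> 0"
    show "\<forall>m\<in>{2..d}. 0 \<le> S X m"
      using h Se by (auto simp: less_eq_complex_def)
  qed
  also have "\<dots> \<longleftrightarrow> (\<forall>i<d. \<mu> i \<ge> 0)"
    using esym_nonneg_imp[of d \<mu>] esym_nonneg[of d \<mu>] by blast
  also have "\<dots> \<longleftrightarrow> positive_semidef d X"
    unfolding Xeq by (rule ud_psd[OF U, symmetric])
  finally show ?thesis .
qed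



lemma qf_sum: "M \<in> carrier_mat n n \<Longrightarrow> v \<in> carrier_vec n \<Longrightarrow>
  conjugate v \<bullet> (M *\<^sub>v v) = (\<Sum>i<n. \<Sum>j<n. cnj (v $ i) * M $$ (i, j) * v $ j)"
  by (simp add: scalar_prod_def row_def lessThan_atLeast0 sum_distrib_left mult.assoc)

lemma qf_lin:
  assumes A: "A \<in> carrier_mat n n" and B: "B \<in> carrier_mat n n" and v: "v \<in> carrier_vec n"
  shows "conjugate v \<bullet> ((complex_of_real a \<cdot>\<^sub>m A - complex_of_real b \<cdot>\<^sub>m B) *\<^sub>v v)
    = complex_of_real a * (conjugate v \<bullet> (A *\<^sub>v v)) - complex_of_real b * (conjugate v \<bullet> (B *\<^sub>v v))"
proof -
  have C: "complex_of_real a \<cdot>\<^sub>m A - complex_of_real b \<cdot>\<^sub>m B \<in> carrier_mat n n"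
    using A B by (intro minus_carrier_mat) auto
  have "conjugate v \<bullet> ((complex_of_real a \<cdot>\<^sub>m A - complex_of_real b \<cdot>\<^sub>m B) *\<^sub>v v)
     = (\<Sum>i<n. \<Sum>j<n. cnj (v $ i) * (complex_of_real a \<cdot>\<^sub>m A - complex_of_real b \<cdot>\<^sub>m B) $$ (i, j) * v $ j)"
    by (rule qf_sum[OF C v])
  also have "\<dots> = (\<Sum>i<n. \<Sum>j<n. complex_of_real a * (cnj (v $ i) * A $$ (i, j) * v $ j)
        - complex_of_real b * (cnj (v $ i) * B $$ (i, j) * v $ j))"
    using A B by (intro sum.cong refl) (auto simp: algebra_simps)
  also have "\<dots> = complex_of_real a * (\<Sum>i<n. \<Sum>j<n. cnj (v $ i) * A $$ (i, j) * v $ j)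
        - complex_of_real b * (\<Sum>i<n. \<Sum>j<n. cnj (v $ i) * B $$ (i, j) * v $ j)"
    by (simp add: sum_subtractf sum_distrib_left)
  also have "\<dots> = complex_of_real a * (conjugate v \<bullet> (A *\<^sub>v v)) - complex_of_real b * (conjugate v \<bullet> (B *\<^sub>v v))"
    by (simp only: qf_sum[OF A v] qf_sum[OF B v])
  finally show ?thesis .
qed

lemma mtrace_lin:
  assumes "A \<in> carrier_mat n n" "B \<in> carrier_mat n n"
  shows "mtrace (complex_of_real a \<cdot>\<^sub>m A - complex_of_real b \<cdot>\<^sub>m B) = complex_of_real a * mtrace A - complex_of_real b * mtrace B"
  using assms by (simp add: mtrace_def sum_distrib_left sum_subtractf)

lemma ud_lin:
  assumes U: "U \<in> carrier_mat n n"
  shows "complex_of_real a \<cdot>\<^sub>m (U * diagm n \<mu> * adjoint U) - complex_of_real b \<cdot>\<^sub>m (U * diagm n \<nu> * adjoint U)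
     = U * diagm n (\<lambda>i. a * \<mu> i - b * \<nu> i) * adjoint U"
proof (rule eq_matI)
  fix i j assume "i < dim_row (U * diagm n (\<lambda>i. a * \<mu> i - b * \<nu> i) * adjoint U)"
    "j < dim_col (U * diagm n (\<lambda>i. a * \<mu> i - b * \<nu> i) * adjoint U)"
  then have i: "i < n" and j: "j < n" using U by auto
  show "(complex_of_real a \<cdot>\<^sub>m (U * diagm n \<mu> * adjoint U) - complex_of_real b \<cdot>\<^sub>m (U * diagm n \<nu> * adjoint U)) $$ (i, j)
     = (U * diagm n (\<lambda>i. a * \<mu> i - b * \<nu> i) * adjoint U) $$ (i, j)"
  proof -
    have "(complex_of_real a \<cdot>\<^sub>m (U * diagm n \<mu> * adjoint U) - complex_of_real b \<cdot>\<^sub>m (U * diagm n \<nu> * adjoint U)) $$ (i, j)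
      = complex_of_real a * (U * diagm n \<mu> * adjoint U) $$ (i, j) - complex_of_real b * (U * diagm n \<nu> * adjoint U) $$ (i, j)"
    proof -
      have d1: "dim_row (U * diagm n \<nu> * adjoint U) = n" "dim_col (U * diagm n \<nu> * adjoint U) = n"
        "dim_row (U * diagm n \<mu> * adjoint U) = n" "dim_col (U * diagm n \<mu> * adjoint U) = n"
        using U by auto
      show ?thesis using i j by (simp only: index_minus_mat index_smult_mat d1)
    qed
    also have "\<dots> = complex_of_real a * (\<Sum>k<n. U $$ (i, k) * complex_of_real (\<mu> k) * cnj (U $$ (j, k)))
       - complex_of_real b * (\<Sum>k<n. U $$ (i, k) * complex_of_real (\<nu> k) * cnj (U $$ (j, k)))"
      by (simp only: ud_entry[OF U i j])
    also have "\<dots> = (\<Sum>k<n. U $$ (i, k) * complex_of_real (a * \<mu> k - b * \<nu> k) * cnj (U $$ (j, k)))"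
      by (simp add: sum_distrib_left sum_subtractf[symmetric] algebra_simps)
    also have "\<dots> = (U * diagm n (\<lambda>i. a * \<mu> i - b * \<nu> i) * adjoint U) $$ (i, j)"
      by (simp only: ud_entry[OF U i j])
    finally show ?thesis .
  qed
qed (use U in auto)

lemma density_herm: "\<eta> \<in> density d \<Longrightarrow> hermitian d \<eta>"
  by (simp add: density_def positive_semidef_def)

theorem proposition5:
  fixes d :: nat and F :: "complex mat set" and \<rho> :: "complex mat"
    and W :: "nat \<Rightarrow> real \<Rightarrow> complex mat" and s s' :: real
  assumes "d \<ge> 2"
    and "F \<subseteq> density d" and "closed_mat_set d F"
    and "\<rho> \<in> density d" and "\<rho> \<notin> F"
    and W: "\<And>t m. t > 0 \<Longrightarrow> m \<in> {2..d} \<Longrightarrow>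
              hermitian (d ^ m) (W m t) \<and>
              (\<forall>\<eta> \<in> density d. mtrace (W m t * tensor_pow \<eta> m) =
                 S (complex_of_real ((1 + t) / t) \<cdot>\<^sub>m \<eta> - complex_of_real (1 / t) \<cdot>\<^sub>m \<rho>) m)"
    and "0 < s'" and "s' < s"
  shows "{\<eta> \<in> density d. \<forall>m \<in> {2..d}. 0 \<le> mtrace (W m s' * tensor_pow \<eta> m)}
         \<subset> {\<eta> \<in> density d. \<forall>m \<in> {2..d}. 0 \<le> mtrace (W m s * tensor_pow \<eta> m)}"
proof -
  define \<psi> where "\<psi> t \<eta> = complex_of_real ((1 + t) / t) \<cdot>\<^sub>m \<eta> - complex_of_real (1 / t) \<cdot>\<^sub>m \<rho>" for t \<eta>
  have \<rho>d: "\<rho> \<in> density d" by fact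
  have \<rho>c: "\<rho> \<in> carrier_mat d d" and \<rho>h: "adjoint \<rho> = \<rho>" and \<rho>tr: "mtrace \<rho> = 1"
    using \<rho>d by (auto simp: density_def positive_semidef_def hermitian_def)
  have \<rho>q: "0 \<le> conjugate v \<bullet> (\<rho> *\<^sub>v v)" if "v \<in> carrier_vec d" for v
    using \<rho>d that by (auto simp: density_def positive_semidef_def)
  have herm\<psi>: "hermitian d (\<psi> t \<eta>)" if "\<eta> \<in> density d" for t \<eta>
  proof -
    have ec: "\<eta> \<in> carrier_mat d d" and eh: "adjoint \<eta> = \<eta>" using that by (auto simp: density_def positive_semidef_def hermitian_def)
    have "adjoint (\<psi> t \<eta>) = \<psi> t \<eta>" unfolding \<psi>_def by (simp only: adjoint_smult_minus[OF ec \<rho>c] eh \<rho>h)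
    moreover have "\<psi> t \<eta> \<in> carrier_mat d d" unfolding \<psi>_def using ec \<rho>c by (intro minus_carrier_mat) auto
    ultimately show ?thesis unfolding hermitian_def by simp
  qed
  have tr\<psi>: "mtrace (\<psi> t \<eta>) = 1" if "\<eta> \<in> density d" "t > 0" for t \<eta>
  proof -
    have ec: "\<eta> \<in> carrier_mat d d" and etr: "mtrace \<eta> = 1" using that by (auto simp: density_def positive_semidef_def hermitian_def)
    have "mtrace (\<psi> t \<eta>) = complex_of_real ((1 + t) / t) * mtrace \<eta> - complex_of_real (1 / t) * mtrace \<rho>"
      unfolding \<psi>_def by (rule mtrace_lin[OF ec \<rho>c])
    also have "\<dots> = complex_of_real ((1 + t) / t - 1 / t)"
      by (simp only: etr \<rho>tr mult_1_right of_real_diff)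
    also have "(1 + t) / t - 1 / t = 1" using that(2) by (simp add: field_simps)
    finally show ?thesis by simp
  qed
  have setE: "{\<eta> \<in> density d. \<forall>m \<in> {2..d}. 0 \<le> mtrace (W m t * tensor_pow \<eta> m)}
      = {\<eta> \<in> density d. positive_semidef d (\<psi> t \<eta>)}" if t: "t > 0" for t
  proof -
    have "(\<forall>m \<in> {2..d}. 0 \<le> mtrace (W m t * tensor_pow \<eta> m)) \<longleftrightarrow> positive_semidef d (\<psi> t \<eta>)"
      if \<eta>: "\<eta> \<in> density d" for \<eta>
    proof -
      have "(\<forall>m \<in> {2..d}. 0 \<le> mtrace (W m t * tensor_pow \<eta> m)) \<longleftrightarrow> (\<forall>m \<in> {2..d}. 0 \<le> S (\<psi> t \<eta>) m)"
        using W[OF t] \<eta> unfolding \<psi>_def by auto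
      also have "\<dots> \<longleftrightarrow> positive_semidef d (\<psi> t \<eta>)"
        by (rule herm_S_psd[OF herm\<psi>[OF \<eta>] tr\<psi>[OF \<eta> t]])
      finally show ?thesis .
    qed
    then show ?thesis by auto
  qed
  have qf\<psi>: "conjugate v \<bullet> (\<psi> t \<eta> *\<^sub>v v) = complex_of_real ((1 + t) / t) * (conjugate v \<bullet> (\<eta> *\<^sub>v v))
       - complex_of_real (1 / t) * (conjugate v \<bullet> (\<rho> *\<^sub>v v))"
    if "\<eta> \<in> density d" "v \<in> carrier_vec d" for t \<eta> v
  proof -
    have "\<eta> \<in> carrier_mat d d" using that by (auto simp: density_def positive_semidef_def hermitian_def)
    then show ?thesis unfolding \<psi>_def using \<rho>c that(2) by (rule qf_lin)
  qed
  have sub: "positive_semidef d (\<psi> s \<eta>)" if \<eta>: "\<eta> \<in> density d" and p: "positive_semidef d (\<psi> s' \<eta>)" for \<eta>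
    unfolding positive_semidef_def
  proof (intro conjI ballI herm\<psi>[OF \<eta>])
    fix v :: "complex vec" assume v: "v \<in> carrier_vec d"
    define x where "x = conjugate v \<bullet> (\<eta> *\<^sub>v v)"
    define y where "y = conjugate v \<bullet> (\<rho> *\<^sub>v v)"
    have x: "0 \<le> x" using \<eta> v by (auto simp: x_def density_def positive_semidef_def)
    have y: "0 \<le> y" using \<rho>q[OF v] by (simp add: y_def)
    have h: "0 \<le> complex_of_real ((1 + s') / s') * x - complex_of_real (1 / s') * y"
      using p v qf\<psi>[OF \<eta> v, of s'] by (auto simp: positive_semidef_def x_def y_def)
    have xr: "Im x = 0" "Re x \<ge> 0" using x by (auto simp: less_eq_complex_def)
    have yr: "Im y = 0" "Re y \<ge> 0" using y by (auto simp: less_eq_complex_def)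
    have h': "0 \<le> (1 + s') / s' * Re x - 1 / s' * Re y" using h by (simp add: less_eq_complex_def)
    have "0 \<le> (1 + s') * Re x - Re y"
    proof -
      have "0 \<le> s' * ((1 + s') / s' * Re x - 1 / s' * Re y)" using h' \<open>0 < s'\<close> by simp
      also have "\<dots> = (1 + s') * Re x - Re y" using \<open>0 < s'\<close> by (simp add: field_simps)
      finally show ?thesis .
    qed
    then have "0 \<le> (1 + s) * Re x - Re y" using \<open>s' < s\<close> xr(2)
      by (smt (verit) mult_right_mono)
    then have "0 \<le> ((1 + s) * Re x - Re y) / s" using \<open>0 < s'\<close> \<open>s' < s\<close> by simp
    also have "((1 + s) * Re x - Re y) / s = (1 + s) / s * Re x - 1 / s * Re y" using \<open>0 < s'\<close> \<open>s' < s\<close> by (simp add: field_simps)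
    finally have "0 \<le> (1 + s) / s * Re x - 1 / s * Re y" .
    then show "0 \<le> conjugate v \<bullet> (\<psi> s \<eta> *\<^sub>v v)"
      unfolding qf\<psi>[OF \<eta> v] x_def[symmetric] y_def[symmetric]
      using xr yr by (simp add: less_eq_complex_def)
  qed
  obtain U lam where U: "unitary d U" and \<rho>eq: "\<rho> = U * diagm d lam * adjoint U"
    using spectral[OF \<rho>c \<rho>h] by blast
  have Uc: "U \<in> carrier_mat d d" using U by (simp add: unitary_def)
  have lamnn: "\<forall>i<d. lam i \<ge> 0"
    using \<rho>d ud_psd[OF U, of lam] \<rho>eq by (simp add: density_def)
  have lamsum: "(\<Sum>i<d. lam i) = 1"
  proof -
    have "complex_of_real (\<Sum>i<d. lam i) = 1"
      using \<rho>tr \<rho>eq mtrace_conj[OF U, of "diagm d lam"] by (simp only: mtrace_diagm diagm_carrier)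
    then show ?thesis by (simp only: of_real_eq_1_iff)
  qed
  obtain k where k: "k < d" "lam k > 0"
  proof (rule ccontr)
    assume "\<not> thesis"
    then have "\<forall>i<d. lam i \<le> 0" using that by force
    then have "(\<Sum>i<d. lam i) \<le> 0" by (intro sum_nonpos) auto
    then show False using lamsum by simp
  qed
  define j :: nat where "j = (if k = 0 then 1 else 0)"
  have j: "j < d" "j \<noteq> k" using \<open>d \<ge> 2\<close> k by (auto simp: j_def)
  define lp where "lp i = lam i / (1 + s) + (if i = j then s / (1 + s) else 0)" for i
  define \<eta> where "\<eta> = U * diagm d lp * adjoint U"
  have spos: "s > 0" using \<open>0 < s'\<close> \<open>s' < s\<close> by simp
  have \<eta>d: "\<eta> \<in> density d"
  proof -
    have "\<forall>i<d. lp i \<ge> 0" using lamnn spos by (auto simp: lp_def)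
    then have "positive_semidef d \<eta>" unfolding \<eta>_def using ud_psd[OF U] by blast
    moreover have "(\<Sum>i<d. lp i) = (\<Sum>i<d. lam i) / (1 + s) + s / (1 + s)"
      unfolding lp_def using j by (simp add: sum.distrib sum_divide_distrib)
    then have "(\<Sum>i<d. lp i) = 1" using lamsum spos by (simp add: field_simps)
    then have "mtrace \<eta> = 1" unfolding \<eta>_def using mtrace_conj[OF U, of "diagm d lp"] by (simp add: mtrace_diagm)
    ultimately show ?thesis by (simp add: density_def)
  qed
  have \<psi>\<eta>: "\<psi> t \<eta> = U * diagm d (\<lambda>i. (1 + t) / t * lp i - 1 / t * lam i) * adjoint U" for t
    unfolding \<psi>_def \<eta>_def \<rho>eq by (rule ud_lin[OF Uc])
  have in_s: "positive_semidef d (\<psi> s \<eta>)"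
  proof -
    have "(1 + s) / s * lp i - 1 / s * lam i \<ge> 0" for i
    proof -
      have e: "(1 + s) / s * (x / (1 + s) + c) - 1 / s * x = (1 + s) / s * c" for x c
      proof -
        have "(1 + s) / s * (x / (1 + s)) = x / s" using spos by simp
        then show ?thesis by (simp add: distrib_left)
      qed
      have "(1 + s) / s * lp i - 1 / s * lam i = (1 + s) / s * (if i = j then s / (1 + s) else 0)"
        unfolding lp_def by (rule e)
      also have "\<dots> = (if i = j then 1 else 0)" using spos by simp
      finally have "(1 + s) / s * lp i - 1 / s * lam i = (if i = j then 1 else 0)" .
      then show ?thesis by simp
    qed
    then show ?thesis unfolding \<psi>\<eta> using ud_psd[OF U] by blast
  qed
  have notin_s': "\<not> positive_semidef d (\<psi> s' \<eta>)"
  proof -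
    have lpk: "lp k = lam k / (1 + s)" using j by (simp add: lp_def)
    have r: "(1 + s') / (1 + s) < 1" using \<open>0 < s'\<close> \<open>s' < s\<close> by simp
    have q: "lam k / s' > 0" using k \<open>0 < s'\<close> by simp
    have "(1 + s') / s' * lp k = ((1 + s') / (1 + s)) * (lam k / s')" unfolding lpk by simp
    also have "\<dots> < 1 * (lam k / s')" using r q by (intro mult_strict_right_mono) auto
    also have "\<dots> = 1 / s' * lam k" by simp
    finally have "(1 + s') / s' * lp k - 1 / s' * lam k < 0" by simp
    then show ?thesis unfolding \<psi>\<eta> using ud_psd[OF U] k by force
  qed
  have s'pos: "s' > 0" by fact
  show ?thesis
    unfolding setE[OF s'pos] setE[OF spos]
    using sub \<eta>d in_s notin_s' by blast
qed


end
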